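(* Let $(G,\cdot)$ be a group of nilpotence class (at most) two. For $\psi\in\operatorname{End}(G)$ define $g\circ_\psi h=g\cdot\psi(g)\cdot h\cdot\psi(g)^{-1}$. Then $(\circ_\psi:\psi\in\operatorname{End}(G))$ is a brace block on $G$.
   Context: A skew brace is a triple $(G,\cdot,\circ)$ where $(G,\cdot)$ and $(G,\circ)$ are groups and $g\circ(h\cdot k)=(g\circ h)\cdot g^{-1}\cdot(g\circ k)$ for all $g,h,k$. A bi-skew brace is a triple $(G,\cdot,\circ)$ such that both $(G,\cdot,\circ)$ and $(G,\circ,\cdot)$ are skew braces. A brace block on a set $G$ is a family $\mathcal{F}$ of group operations on $G$ such that $(G,\circ,\diamond)$ is a bi-skew brace for all $\circ,\diamond\in\mathcal{F}$. *)

theory Defs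
  imports "HOL-Algebra.Group"
begin

definition group_of :: "'a set \<Rightarrow> ('a \<Rightarrow> 'a \<Rightarrow> 'a) \<Rightarrow> 'a monoid" where
  "group_of S op = \<lparr>carrier = S, mult = op,
     one = (THE e. e \<in> S \<and> (\<forall>x\<in>S. op e x = x \<and> op x e = x))\<rparr>"

definition is_group_op :: "'a set \<Rightarrow> ('a \<Rightarrow> 'a \<Rightarrow> 'a) \<Rightarrow> bool" where
  "is_group_op S op \<longleftrightarrow> group (group_of S op)"

definition skew_brace :: "'a set \<Rightarrow> ('a \<Rightarrow> 'a \<Rightarrow> 'a) \<Rightarrow> ('a \<Rightarrow> 'a \<Rightarrow> 'a) \<Rightarrow> bool" where
  "skew_brace S dot circ \<longleftrightarrow> is_group_op S dot \<and> is_group_op S circ \<and>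
     (\<forall>g\<in>S. \<forall>h\<in>S. \<forall>k\<in>S.
        circ g (dot h k) = dot (dot (circ g h) (inv\<^bsub>group_of S dot\<^esub> g)) (circ g k))"

definition bi_skew_brace :: "'a set \<Rightarrow> ('a \<Rightarrow> 'a \<Rightarrow> 'a) \<Rightarrow> ('a \<Rightarrow> 'a \<Rightarrow> 'a) \<Rightarrow> bool" where
  "bi_skew_brace S dot circ \<longleftrightarrow> skew_brace S dot circ \<and> skew_brace S circ dot"

definition brace_block :: "'a set \<Rightarrow> ('a \<Rightarrow> 'a \<Rightarrow> 'a) set \<Rightarrow> bool" where
  "brace_block S F \<longleftrightarrow> (\<forall>op\<in>F. is_group_op S op) \<and>
     (\<forall>op1\<in>F. \<forall>op2\<in>F. bi_skew_brace S op1 op2)"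

text \<open>Nilpotence class at most two: every commutator is central.\<close>
definition nilpotent_class_le2 :: "('a, 'b) monoid_scheme \<Rightarrow> bool" where
  "nilpotent_class_le2 G \<longleftrightarrow> (\<forall>x\<in>carrier G. \<forall>y\<in>carrier G. \<forall>z\<in>carrier G.
     (inv\<^bsub>G\<^esub> x \<otimes>\<^bsub>G\<^esub> inv\<^bsub>G\<^esub> y \<otimes>\<^bsub>G\<^esub> x \<otimes>\<^bsub>G\<^esub> y) \<otimes>\<^bsub>G\<^esub> z
     = z \<otimes>\<^bsub>G\<^esub> (inv\<^bsub>G\<^esub> x \<otimes>\<^bsub>G\<^esub> inv\<^bsub>G\<^esub> y \<otimes>\<^bsub>G\<^esub> x \<otimes>\<^bsub>G\<^esub> y))"

definition circ_psi :: "('a, 'b) monoid_scheme \<Rightarrow> ('a \<Rightarrow> 'a) \<Rightarrow> 'a \<Rightarrow> 'a \<Rightarrow> 'a" where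
  "circ_psi G \<psi> g h = g \<otimes>\<^bsub>G\<^esub> \<psi> g \<otimes>\<^bsub>G\<^esub> h \<otimes>\<^bsub>G\<^esub> inv\<^bsub>G\<^esub> (\<psi> g)"

end

theory Submission imports Defs begin

definition cj :: "('a,'b) monoid_scheme \<Rightarrow> 'a \<Rightarrow> 'a \<Rightarrow> 'a" where
  "cj G a h = a \<otimes>\<^bsub>G\<^esub> h \<otimes>\<^bsub>G\<^esub> inv\<^bsub>G\<^esub> a"

locale nil2 = group G for G (structure) +
  assumes nil: "nilpotent_class_le2 G"
begin

lemma cancel1: "x \<in> carrier G \<Longrightarrow> y \<in> carrier G \<Longrightarrow> inv x \<otimes> (x \<otimes> y) = y"
  by (simp flip: m_assoc)
lemma cancel2: "x \<in> carrier G \<Longrightarrow> y \<in> carrier G \<Longrightarrow> x \<otimes> (inv x \<otimes> y) = y"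
  by (simp flip: m_assoc)

lemma cj_closed[simp]: "a \<in> carrier G \<Longrightarrow> h \<in> carrier G \<Longrightarrow> cj G a h \<in> carrier G"
  by (simp add: cj_def)

lemma cj_mult: "a \<in> carrier G \<Longrightarrow> h \<in> carrier G \<Longrightarrow> k \<in> carrier G \<Longrightarrow>
   cj G a (h \<otimes> k) = cj G a h \<otimes> cj G a k"
  by (simp add: cj_def m_assoc cancel1)

lemma cj_inv: "a \<in> carrier G \<Longrightarrow> h \<in> carrier G \<Longrightarrow> cj G a (inv h) = inv (cj G a h)"
  by (simp add: cj_def m_assoc inv_mult_group)

lemma cj_comp: "a \<in> carrier G \<Longrightarrow> b \<in> carrier G \<Longrightarrow> h \<in> carrier G \<Longrightarrow>
   cj G (a \<otimes> b) h = cj G a (cj G b h)"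
  by (simp add: cj_def m_assoc inv_mult_group)

lemma cj_one[simp]: "h \<in> carrier G \<Longrightarrow> cj G \<one> h = h"
  by (simp add: cj_def)
lemma cj_one2[simp]: "a \<in> carrier G \<Longrightarrow> cj G a \<one> = \<one>"
  by (simp add: cj_def)

lemma cj_cancel: "a \<in> carrier G \<Longrightarrow> h \<in> carrier G \<Longrightarrow> cj G (inv a) (cj G a h) = h"
  by (simp add: cj_def m_assoc cancel1)
lemma cj_cancel2: "a \<in> carrier G \<Longrightarrow> h \<in> carrier G \<Longrightarrow> cj G a (cj G (inv a) h) = h"
  by (simp add: cj_def m_assoc cancel2)

lemma central: "a \<in> carrier G \<Longrightarrow> b \<in> carrier G \<Longrightarrow> x \<in> carrier G \<Longrightarrow>
  (a \<otimes> b \<otimes> inv a \<otimes> inv b) \<otimes> x = x \<otimes> (a \<otimes> b \<otimes> inv a \<otimes> inv b)"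
  using nil[unfolded nilpotent_class_le2_def, rule_format, of "inv a" "inv b" x] by simp

lemma cj_cj: "a \<in> carrier G \<Longrightarrow> b \<in> carrier G \<Longrightarrow> h \<in> carrier G \<Longrightarrow>
   cj G (cj G a b) h = cj G b h"
proof -
  assume ab: "a \<in> carrier G" "b \<in> carrier G" and h: "h \<in> carrier G"
  define z where "z = a \<otimes> b \<otimes> inv a \<otimes> inv b"
  have zc: "z \<in> carrier G" using ab by (simp add: z_def)
  have zz: "\<And>x. x \<in> carrier G \<Longrightarrow> z \<otimes> x = x \<otimes> z" unfolding z_def using central ab by blast
  have 1: "cj G a b = z \<otimes> b" using ab by (simp add: z_def cj_def m_assoc)
  have "cj G (z \<otimes> b) h = z \<otimes> (cj G b h \<otimes> inv z)"
    using ab h zc by (simp add: cj_def m_assoc inv_mult_group)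
  also have "\<dots> = (z \<otimes> cj G b h) \<otimes> inv z" using ab h zc by (simp add: m_assoc)
  also have "\<dots> = (cj G b h \<otimes> z) \<otimes> inv z" using zz[of "cj G b h"] ab h by simp
  also have "\<dots> = cj G b h" using ab h zc by (simp add: m_assoc)
  finally show ?thesis using 1 by simp
qed

lemma cj_commute: "a \<in> carrier G \<Longrightarrow> b \<in> carrier G \<Longrightarrow> h \<in> carrier G \<Longrightarrow>
   cj G a (cj G b h) = cj G b (cj G a h)"
proof -
  assume ab: "a \<in> carrier G" "b \<in> carrier G" and h: "h \<in> carrier G"
  have "a \<otimes> b = cj G a b \<otimes> a" using ab by (simp add: cj_def m_assoc)
  then have "cj G (a \<otimes> b) h = cj G (cj G a b \<otimes> a) h" by simp
  then show ?thesis using ab h by (simp add: cj_comp cj_cj)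
qed

lemma hom_cj: "\<psi> \<in> hom G G \<Longrightarrow> a \<in> carrier G \<Longrightarrow> b \<in> carrier G \<Longrightarrow>
   \<psi> (cj G a b) = cj G (\<psi> a) (\<psi> b)"
proof -
  assume p: "\<psi> \<in> hom G G" and ab: "a \<in> carrier G" "b \<in> carrier G"
  interpret h: group_hom G G \<psi> using p by (simp add: group_hom_def group_hom_axioms_def is_group)
  show ?thesis using ab by (simp add: cj_def)
qed

lemma hc: "\<psi> \<in> hom G G \<Longrightarrow> x \<in> carrier G \<Longrightarrow> \<psi> x \<in> carrier G"
  by (auto simp: hom_def)

lemma hm: "\<psi> \<in> hom G G \<Longrightarrow> x \<in> carrier G \<Longrightarrow> y \<in> carrier G \<Longrightarrow> \<psi> (x \<otimes> y) = \<psi> x \<otimes> \<psi> y"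
  by (auto simp: hom_def)

lemma hi: "\<psi> \<in> hom G G \<Longrightarrow> x \<in> carrier G \<Longrightarrow> \<psi> (inv x) = inv (\<psi> x)"
proof -
  assume p: "\<psi> \<in> hom G G" and x: "x \<in> carrier G"
  interpret h: group_hom G G \<psi> using p by (simp add: group_hom_def group_hom_axioms_def is_group)
  show ?thesis using x by simp
qed

lemma h1: "\<psi> \<in> hom G G \<Longrightarrow> \<psi> \<one> = \<one>"
  using hom_one is_group by blast

lemma circ_eq: "g \<in> carrier G \<Longrightarrow> h \<in> carrier G \<Longrightarrow> \<psi> \<in> hom G G \<Longrightarrow>
   circ_psi G \<psi> g h = g \<otimes> cj G (\<psi> g) h"
  by (simp add: circ_psi_def cj_def m_assoc hc)

lemma gamma: "\<psi> \<in> hom G G \<Longrightarrow> a \<in> carrier G \<Longrightarrow> g \<in> carrier G \<Longrightarrow> h \<in> carrier G \<Longrightarrow> x \<in> carrier G \<Longrightarrow>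
   cj G (\<psi> (g \<otimes> cj G a h)) x = cj G (\<psi> g) (cj G (\<psi> h) x)"
  by (simp add: hm hc hom_cj cj_comp cj_cj)

lemma circ_closed: "\<psi> \<in> hom G G \<Longrightarrow> g \<in> carrier G \<Longrightarrow> h \<in> carrier G \<Longrightarrow> circ_psi G \<psi> g h \<in> carrier G"
  by (simp add: circ_eq hc)

lemma one_eq: "\<psi> \<in> hom G G \<Longrightarrow>
  (THE e. e \<in> carrier G \<and> (\<forall>x\<in>carrier G. circ_psi G \<psi> e x = x \<and> circ_psi G \<psi> x e = x)) = \<one>"
proof (rule the_equality)
  assume p: "\<psi> \<in> hom G G"
  show "\<one> \<in> carrier G \<and> (\<forall>x\<in>carrier G. circ_psi G \<psi> \<one> x = x \<and> circ_psi G \<psi> x \<one> = x)"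
    using p by (simp add: circ_eq hc hi)
       (metis cj_one hom_one is_group)
  fix e assume "e \<in> carrier G \<and> (\<forall>x\<in>carrier G. circ_psi G \<psi> e x = x \<and> circ_psi G \<psi> x e = x)"
  then have "e \<in> carrier G" "circ_psi G \<psi> e \<one> = \<one>" by auto
  then show "e = \<one>" using p by (simp add: circ_eq hc)
qed

lemma grp: "\<psi> \<in> hom G G \<Longrightarrow> is_group_op (carrier G) (circ_psi G \<psi>)"
  unfolding is_group_op_def
proof (rule groupI)
  assume p: "\<psi> \<in> hom G G"
  show "\<one>\<^bsub>group_of (carrier G) (circ_psi G \<psi>)\<^esub> \<in> carrier (group_of (carrier G) (circ_psi G \<psi>))"
    by (simp add: group_of_def one_eq p)
  fix x y z
  assume x: "x \<in> carrier (group_of (carrier G) (circ_psi G \<psi>))"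
    and y: "y \<in> carrier (group_of (carrier G) (circ_psi G \<psi>))"
    and z: "z \<in> carrier (group_of (carrier G) (circ_psi G \<psi>))"
  then have c: "x \<in> carrier G" "y \<in> carrier G" "z \<in> carrier G" by (auto simp: group_of_def)
  show "x \<otimes>\<^bsub>group_of (carrier G) (circ_psi G \<psi>)\<^esub> y \<in> carrier (group_of (carrier G) (circ_psi G \<psi>))"
    using c p by (simp add: group_of_def circ_closed)
  show "x \<otimes>\<^bsub>group_of (carrier G) (circ_psi G \<psi>)\<^esub> y \<otimes>\<^bsub>group_of (carrier G) (circ_psi G \<psi>)\<^esub> z =
        x \<otimes>\<^bsub>group_of (carrier G) (circ_psi G \<psi>)\<^esub> (y \<otimes>\<^bsub>group_of (carrier G) (circ_psi G \<psi>)\<^esub> z)"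
  proof -
    have e1: "circ_psi G \<psi> (circ_psi G \<psi> x y) z = x \<otimes> cj G (\<psi> x) y \<otimes> cj G (\<psi> x) (cj G (\<psi> y) z)"
      using c p by (simp add: circ_eq hc gamma circ_closed)
    have e2: "circ_psi G \<psi> x (circ_psi G \<psi> y z) = x \<otimes> (cj G (\<psi> x) y \<otimes> cj G (\<psi> x) (cj G (\<psi> y) z))"
      using c p by (simp add: circ_eq hc cj_mult circ_closed)
    show ?thesis using e1 e2 c p by (simp add: group_of_def m_assoc hc)
  qed
  show "\<one>\<^bsub>group_of (carrier G) (circ_psi G \<psi>)\<^esub> \<otimes>\<^bsub>group_of (carrier G) (circ_psi G \<psi>)\<^esub> x = x"
    using c p by (simp add: group_of_def one_eq circ_eq h1)
  show "\<exists>y\<in>carrier (group_of (carrier G) (circ_psi G \<psi>)). y \<otimes>\<^bsub>group_of (carrier G) (circ_psi G \<psi>)\<^esub> x = \<one>\<^bsub>group_of (carrier G) (circ_psi G \<psi>)\<^esub>"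
  proof
    let ?y = "inv (cj G (inv (\<psi> x)) x)"
    have "cj G (\<psi> ?y) x = cj G (inv (\<psi> x)) x"
    proof -
      have "\<psi> ?y = inv (cj G (inv (\<psi> (\<psi> x))) (\<psi> x))"
        using c p by (simp add: hi hc hom_cj)
      also have "\<dots> = cj G (inv (\<psi> (\<psi> x))) (inv (\<psi> x))"
        using c p by (simp add: hc cj_inv)
      finally show ?thesis using c p by (simp add: hc cj_cj)
    qed
    then show "?y \<otimes>\<^bsub>group_of (carrier G) (circ_psi G \<psi>)\<^esub> x = \<one>\<^bsub>group_of (carrier G) (circ_psi G \<psi>)\<^esub>"
      using c p by (simp add: group_of_def one_eq circ_eq hc)
    show "?y \<in> carrier (group_of (carrier G) (circ_psi G \<psi>))" using c p by (simp add: group_of_def hc)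
  qed
qed

lemma inv_circ: "\<psi> \<in> hom G G \<Longrightarrow> g \<in> carrier G \<Longrightarrow>
  inv\<^bsub>group_of (carrier G) (circ_psi G \<psi>)\<^esub> g = cj G (inv (\<psi> g)) (inv g)"
proof -
  assume p: "\<psi> \<in> hom G G" and g: "g \<in> carrier G"
  have H: "group (group_of (carrier G) (circ_psi G \<psi>))" using grp[OF p] by (simp add: is_group_op_def)
  have "circ_psi G \<psi> g (cj G (inv (\<psi> g)) (inv g)) = \<one>"
    using p g by (simp add: circ_eq hc cj_cancel2)
  then have "g \<otimes>\<^bsub>group_of (carrier G) (circ_psi G \<psi>)\<^esub> cj G (inv (\<psi> g)) (inv g) = \<one>\<^bsub>group_of (carrier G) (circ_psi G \<psi>)\<^esub>"
    using p by (simp add: group_of_def one_eq)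
  then have "cj G (inv (\<psi> g)) (inv g) \<otimes>\<^bsub>group_of (carrier G) (circ_psi G \<psi>)\<^esub> g = \<one>\<^bsub>group_of (carrier G) (circ_psi G \<psi>)\<^esub>"
    by (rule group.inv_comm[OF H]) (simp_all add: group_of_def hc p g)
  then show ?thesis by (rule group.inv_equality[OF H]) (simp_all add: group_of_def hc p g)
qed

lemma sb: "\<psi> \<in> hom G G \<Longrightarrow> \<phi> \<in> hom G G \<Longrightarrow> skew_brace (carrier G) (circ_psi G \<psi>) (circ_psi G \<phi>)"
  unfolding skew_brace_def
proof (intro conjI ballI)
  assume p: "\<psi> \<in> hom G G" and f: "\<phi> \<in> hom G G"
  show "is_group_op (carrier G) (circ_psi G \<psi>)" using grp p .
  show "is_group_op (carrier G) (circ_psi G \<phi>)" using grp f .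
  fix g h k assume g: "g \<in> carrier G" and h: "h \<in> carrier G" and k: "k \<in> carrier G"
  note c = g h k p f
  define A where "A = g \<otimes> cj G (\<phi> g) h"
  define gb where "gb = cj G (inv (\<psi> g)) (inv g)"
  define B where "B = A \<otimes> cj G (\<psi> h) (inv g)"
  define C where "C = g \<otimes> cj G (\<phi> g) k"
  have Ac: "A \<in> carrier G" "gb \<in> carrier G" "C \<in> carrier G" using c by (auto simp: A_def gb_def C_def hc)
  have Bc: "B \<in> carrier G" using c Ac by (simp add: B_def hc)
  have L: "circ_psi G \<phi> g (circ_psi G \<psi> h k) = A \<otimes> cj G (\<phi> g) (cj G (\<psi> h) k)"
    using c by (simp add: circ_eq hc cj_mult A_def m_assoc)
  have "cj G (\<psi> A) gb = cj G (\<psi> g) (cj G (\<psi> h) gb)"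
    unfolding A_def using c Ac by (simp add: gamma hc)
  also have "\<dots> = cj G (\<psi> h) (inv g)"
    unfolding gb_def using c by (simp add: hc cj_commute[of "\<psi> g" "\<psi> h"] cj_cancel2)
  finally have s1: "circ_psi G \<psi> A gb = B" using c Ac by (simp add: circ_eq B_def)
  have cjB: "cj G (\<psi> B) x = cj G (\<psi> h) x" if x: "x \<in> carrier G" for x
  proof -
    have "cj G (\<psi> B) x = cj G (\<psi> A) (cj G (\<psi> (cj G (\<psi> h) (inv g))) x)"
      unfolding B_def using c Ac x by (simp add: hm hc cj_comp)
    also have "\<dots> = cj G (\<psi> g) (cj G (\<psi> h) (cj G (inv (\<psi> g)) x))"
      unfolding A_def using c x by (simp add: gamma hc hom_cj cj_cj hi)
    also have "\<dots> = cj G (\<psi> h) x"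
      using c x by (simp add: hc cj_commute[of "\<psi> g" "\<psi> h"] cj_cancel2)
    finally show ?thesis .
  qed
  have "circ_psi G \<psi> B C = B \<otimes> cj G (\<psi> h) C" using c Ac Bc by (simp add: circ_eq cjB)
  also have "\<dots> = A \<otimes> (cj G (\<psi> h) (inv g) \<otimes> (cj G (\<psi> h) g \<otimes> cj G (\<psi> h) (cj G (\<phi> g) k)))"
    unfolding B_def C_def using c Ac by (simp add: cj_mult hc m_assoc)
  also have "\<dots> = A \<otimes> cj G (\<psi> h) (cj G (\<phi> g) k)"
    using c Ac by (simp add: cj_inv hc cancel1)
  also have "\<dots> = A \<otimes> cj G (\<phi> g) (cj G (\<psi> h) k)"
    using c by (simp add: hc cj_commute[of "\<psi> h" "\<phi> g" k])
  finally have R: "circ_psi G \<psi> B C = A \<otimes> cj G (\<phi> g) (cj G (\<psi> h) k)" .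
  show "circ_psi G \<phi> g (circ_psi G \<psi> h k) =
     circ_psi G \<psi> (circ_psi G \<psi> (circ_psi G \<phi> g h) (inv\<^bsub>group_of (carrier G) (circ_psi G \<psi>)\<^esub> g)) (circ_psi G \<phi> g k)"
    using L R s1 c by (simp add: inv_circ gb_def[symmetric] circ_eq A_def[symmetric] C_def[symmetric])
qed

end

theorem mainTheorem9:
  fixes G :: "('a, 'b) monoid_scheme"
  assumes "group G"
    and "nilpotent_class_le2 G"
  shows "brace_block (carrier G) (circ_psi G ` hom G G)"
proof -
  interpret nil2 G using assms by (simp add: nil2_def nil2_axioms_def)
  show ?thesis unfolding brace_block_def bi_skew_brace_def using grp sb by blast
qed
end
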